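(* Let $\mathcal P$ be a family of subsets of a set $X$ with $\mathcal P\subseteq\mathcal P_{seq}$. Then the $\mathcal Q_{\mathcal P}$-topology on $X/\mathcal P$ is Hausdorff.
   Context: $[x]_{\mathcal P}=\{y\in X:\forall V\in\mathcal P\ (x\in V\iff y\in V)\}$, $X/\mathcal P=\{[x]_{\mathcal P}:x\in X\}$, $q(x)=[x]_{\mathcal P}$, and the $\mathcal Q_{\mathcal P}$-topology is the coarsest topology on $X/\mathcal P$ containing all sets $q[V]$, $V\in\mathcal P$. $\mathcal P_{seq}$ is the family of all sets $W$ for which there exist $\{U_n\}_{n\in\omega},\{V_n\}_{n\in\omega}\subseteq\mathcal P$ with $U_k\subseteq X\setminus V_k\subseteq U_{k+1}$ for every $k$ and $\bigcup_nU_n=W$. *)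

theory Defs
  imports "HOL-Analysis.Analysis"
begin

definition pclass :: "'a set \<Rightarrow> 'a set set \<Rightarrow> 'a \<Rightarrow> 'a set" where
  "pclass X P x = {y \<in> X. \<forall>V\<in>P. (x \<in> V \<longleftrightarrow> y \<in> V)}"

definition pquot :: "'a set \<Rightarrow> 'a set set \<Rightarrow> 'a set set" where
  "pquot X P = pclass X P ` X"

text \<open>The Q_P-topology: coarsest topology on X/P containing all q[V], V in P.
  The whole space X/P is added as a generator so that the topspace is X/P.\<close>
definition Q_topology :: "'a set \<Rightarrow> 'a set set \<Rightarrow> 'a set topology" where
  "Q_topology X P = topology_generated_by (insert (pquot X P) ((\<lambda>V. pclass X P ` V) ` P))"

definition P_seq :: "'a set \<Rightarrow> 'a set set \<Rightarrow> 'a set set" where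
  "P_seq X P = {W. \<exists>U V :: nat \<Rightarrow> 'a set. (\<forall>n. U n \<in> P \<and> V n \<in> P) \<and>
      (\<forall>k. U k \<subseteq> X - V k \<and> X - V k \<subseteq> U (Suc k)) \<and> (\<Union>n. U n) = W}"

end

theory Submission
  imports Defs
begin

lemma sep_aux:
  assumes sub: "\<forall>V\<in>P. V \<subseteq> X" and seq: "P \<subseteq> P_seq X P"
    and W: "W \<in> P" and x: "x \<in> W" and yX: "y \<in> X" and y: "y \<notin> W"
  shows "\<exists>A\<in>P. \<exists>B\<in>P. x \<in> A \<and> y \<in> B \<and> A \<inter> B = {}"
proof -
  from W seq obtain U V :: "nat \<Rightarrow> 'a set" where UV: "\<forall>n. U n \<in> P \<and> V n \<in> P"
    and ch: "\<forall>k. U k \<subseteq> X - V k \<and> X - V k \<subseteq> U (Suc k)" and eq: "(\<Union>n. U n) = W"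
    unfolding P_seq_def by blast
  from x eq obtain n where n: "x \<in> U n" by blast
  have "y \<notin> U (Suc n)" using y eq by blast
  hence "y \<in> V n" using ch yX by blast
  moreover have "U n \<inter> V n = {}" using ch by blast
  ultimately show ?thesis using UV n by blast
qed

theorem lemma3:
  fixes X :: "'a set" and P :: "'a set set"
  assumes "\<forall>V\<in>P. V \<subseteq> X"
    and "P \<subseteq> P_seq X P"
  shows "Hausdorff_space (Q_topology X P)"
  unfolding Hausdorff_space_def
proof (intro allI impI)
  fix c d assume cd: "c \<in> topspace (Q_topology X P) \<and> d \<in> topspace (Q_topology X P) \<and> c \<noteq> d"
  have ts: "topspace (Q_topology X P) \<subseteq> pclass X P ` X"
    using assms(1) unfolding Q_topology_def pquot_def by auto
  from cd ts obtain a b where a: "a \<in> X" "c = pclass X P a" and b: "b \<in> X" "d = pclass X P b"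
    by blast
  have mem: "u \<in> V \<longleftrightarrow> w \<in> V" if "pclass X P u = pclass X P w" "u \<in> X" "V \<in> P" for u w V
  proof -
    have "u \<in> pclass X P u" using that(2) unfolding pclass_def by auto
    hence "u \<in> pclass X P w" using that(1) by simp
    thus ?thesis using that(3) unfolding pclass_def by auto
  qed
  have "\<exists>V\<in>P. (a \<in> V \<and> b \<notin> V) \<or> (b \<in> V \<and> a \<notin> V)"
  proof (rule ccontr)
    assume "\<not> ?thesis"
    hence "\<forall>V\<in>P. a \<in> V \<longleftrightarrow> b \<in> V" by blast
    hence "pclass X P a = pclass X P b" unfolding pclass_def by auto
    thus False using cd a b by simp
  qed
  then obtain A B where AB: "A \<in> P" "B \<in> P" "A \<inter> B = {}"
      and ab: "(a \<in> A \<and> b \<in> B) \<or> (b \<in> A \<and> a \<in> B)"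
    using sep_aux[OF assms] a b by metis
  have op: "openin (Q_topology X P) (pclass X P ` S)" if "S \<in> P" for S
    unfolding Q_topology_def by (rule topology_generated_by_Basis) (use that in blast)
  have dj: "disjnt (pclass X P ` A) (pclass X P ` B)"
    unfolding disjnt_def
  proof (rule ccontr)
    assume "pclass X P ` A \<inter> pclass X P ` B \<noteq> {}"
    then obtain u w where "u \<in> A" "w \<in> B" "pclass X P u = pclass X P w" by blast
    moreover have "u \<in> X" using \<open>u \<in> A\<close> AB assms(1) by blast
    ultimately show False using mem[of u w B] AB by blast
  qed
  show "\<exists>U V. openin (Q_topology X P) U \<and> openin (Q_topology X P) V \<and> c \<in> U \<and> d \<in> V \<and> disjnt U V"
    using ab
  proof
    assume "a \<in> A \<and> b \<in> B" thus ?thesis using op AB dj a b by blast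
  next
    assume h: "b \<in> A \<and> a \<in> B"
    have "disjnt (pclass X P ` B) (pclass X P ` A)" using dj disjnt_sym by metis
    moreover have "c \<in> pclass X P ` B" "d \<in> pclass X P ` A" using h a b by auto
    ultimately show ?thesis using op AB by blast
  qed
qed

end
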